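(* Let $m\ge3$ be a fixed integer and let $S$ be a monoid such that (i) $S$ satisfies $x^{m-2}\,y_1\cdots y_n\,x\,y_n\cdots y_1\,x\approx x^{m-1}\,y_1\cdots y_n\,x\,y_n\cdots y_1\,x$ for each $n>1$; (ii) the words $xyyx$ and $x^{m-1}$ are isoterms for $S$; (iii) the word $x^{m-2}t_1xt_2x$ is an isoterm for $S$; (iv) if $S$ satisfies an identity $\mathbf u\approx x^{m-2}yxyx$ where $x$ occurs exactly $m$ times in $\mathbf u$, then $\mathbf u=x^{m-2}yxyx$. Then $S$ is non-finitely based.
   Context: All letters denote distinct variables of a countably infinite alphabet; words are elements of the free semigroup on it. A monoid $S$ satisfies an identity $\mathbf u\approx\mathbf v$ if both sides are equal under every evaluation of the variables in $S$. A word $\mathbf w$ is an isoterm for $S$ if $S$ satisfies no identity $\mathbf w\approx\mathbf w'$ with $\mathbf w'\ne\mathbf w$. $S$ is finitely based if all its identities are derivable from a finite subset of them; otherwise non-finitely based. *)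

theory Defs
  imports Main
begin

text \<open>Variables are natural numbers (a countably infinite alphabet).
  A word is a nonempty list of variables (element of the free semigroup).\<close>

type_synonym word = "nat list"

definition is_word :: "word \<Rightarrow> bool" where
  "is_word w \<longleftrightarrow> w \<noteq> []"

definition eval_word :: "(nat \<Rightarrow> 'a::monoid_mult) \<Rightarrow> nat list \<Rightarrow> 'a" where
  "eval_word \<phi> w = prod_list (map \<phi> w)"

definition satisfies :: "'a::monoid_mult itself \<Rightarrow> nat list \<Rightarrow> nat list \<Rightarrow> bool" where
  "satisfies S u v \<longleftrightarrow> (\<forall>\<phi> :: nat \<Rightarrow> 'a. eval_word \<phi> u = eval_word \<phi> v)"

definition isoterm :: "'a::monoid_mult itself \<Rightarrow> word \<Rightarrow> bool" where
  "isoterm S w \<longleftrightarrow> (\<forall>w'. is_word w' \<longrightarrow> satisfies S w w' \<longrightarrow> w' = w)"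

text \<open>Substitution of (possibly empty) words for variables (monoid signature).\<close>
definition subst :: "(nat \<Rightarrow> nat list) \<Rightarrow> nat list \<Rightarrow> nat list" where
  "subst \<sigma> w = concat (map \<sigma> w)"

inductive derivable :: "(nat list \<times> nat list) set \<Rightarrow> nat list \<Rightarrow> nat list \<Rightarrow> bool"
  for \<Sigma> where
  refl: "derivable \<Sigma> u u"
| sym: "derivable \<Sigma> u v \<Longrightarrow> derivable \<Sigma> v u"
| trans: "derivable \<Sigma> u v \<Longrightarrow> derivable \<Sigma> v w \<Longrightarrow> derivable \<Sigma> u w"
| step: "(s, t) \<in> \<Sigma> \<Longrightarrow> derivable \<Sigma> (a @ subst \<sigma> s @ b) (a @ subst \<sigma> t @ b)"

definition finitely_based :: "'a::monoid_mult itself \<Rightarrow> bool" where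
  "finitely_based S \<longleftrightarrow>
     (\<exists>\<Sigma>. finite \<Sigma> \<and> (\<forall>(u, v) \<in> \<Sigma>. satisfies S u v) \<and>
          (\<forall>u v. is_word u \<longrightarrow> is_word v \<longrightarrow> satisfies S u v \<longrightarrow> derivable \<Sigma> u v))"

text \<open>Fixed distinct letters: x = 0, y = 1, t1 = 1, t2 = 2, y_i = i (i \<ge> 1).\<close>

definition word_i :: "nat \<Rightarrow> nat \<Rightarrow> word" where
  "word_i k n = replicate k 0 @ [1..<n+1] @ [0] @ rev [1..<n+1] @ [0]"

end

theory Submission
  imports Defs
begin


lemma eval_append[simp]: "eval_word \<phi> (u @ v) = eval_word \<phi> u * eval_word \<phi> v"
  by (simp add: eval_word_def)

lemma eval_Nil[simp]: "eval_word \<phi> [] = 1"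
  by (simp add: eval_word_def)

lemma eval_subst: "eval_word \<phi> (subst \<sigma> u) = eval_word (\<lambda>v. eval_word \<phi> (\<sigma> v)) u"
  by (induction u) (auto simp: eval_word_def subst_def)

lemma subst_Nil[simp]: "subst \<sigma> [] = []" by (simp add: subst_def)
lemma subst_Cons[simp]: "subst \<sigma> (v # u) = \<sigma> v @ subst \<sigma> u" by (simp add: subst_def)
lemma subst_append[simp]: "subst \<sigma> (u @ w) = subst \<sigma> u @ subst \<sigma> w" by (simp add: subst_def)

lemma sat_subst: "satisfies S u v \<Longrightarrow> satisfies S (subst \<sigma> u) (subst \<sigma> v)"
  unfolding satisfies_def by (simp add: eval_subst)

lemma sat_sym: "satisfies S u v \<Longrightarrow> satisfies S v u"
  unfolding satisfies_def by simp

lemma sat_ctx: "satisfies S u v \<Longrightarrow> satisfies S (a @ u @ b) (a @ v @ b)"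
  unfolding satisfies_def by simp

lemma subst_filter: "subst (\<lambda>x. if P x then [x] else []) u = filter P u"
  by (induction u) auto

lemma subst_map: "subst (\<lambda>x. [f x]) u = map f u"
  by (induction u) auto

lemma sat_filter: "satisfies S u v \<Longrightarrow> satisfies S (filter P u) (filter P v)"
  using sat_subst[of S u v "\<lambda>x. if P x then [x] else []"] by (simp add: subst_filter)

lemma sat_map: "satisfies S u v \<Longrightarrow> satisfies S (map f u) (map f v)"
  using sat_subst[of S u v "\<lambda>x. [f x]"] by (simp add: subst_map)

lemma subst_single: "subst (\<lambda>v. if v = c then [d] else []) u = replicate (count_list u c) d"
  by (induction u) auto

lemma sat_count: "satisfies S u v \<Longrightarrow>
  satisfies S (replicate (count_list u c) d) (replicate (count_list v c) d)"
  using sat_subst[of S u v "\<lambda>v. if v = c then [d] else []"] by (simp add: subst_single)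

lemma replicate_add': "replicate (a + b) x = replicate a x @ replicate b x"
  by (simp add: replicate_add)

lemma sat_empty:
  assumes ii2: "isoterm S (replicate (m - 1) (0::nat))" and m: "m \<ge> 2"
    and s: "satisfies S u []"
  shows "u = []"
proof (rule ccontr)
  assume "u \<noteq> []"
  then obtain c where c: "c \<in> set u" by (cases u) auto
  then have k: "count_list u c \<ge> 1" using count_list_0_iff[of u c] by linarith
  from sat_count[OF s, of c 0] have e: "satisfies S (replicate (count_list u c) (0::nat)) []" by simp
  have "satisfies S (replicate (m-1) (0::nat)) (replicate (m - 1) 0 @ replicate (count_list u c) 0)"
    using e unfolding satisfies_def by simp
  then have "replicate (m - 1) 0 @ replicate (count_list u c) (0::nat) = replicate (m - 1) 0"
    using ii2 unfolding isoterm_def is_word_def using k by (metis Nil_is_append_conv length_replicate not_one_le_zero list.size(3))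
  then have "replicate (m - 1 + count_list u c) (0::nat) = replicate (m - 1) 0"
    by (simp add: replicate_add')
  then show False using k by (metis add_diff_cancel_left' diff_is_0_eq le_add1 length_replicate not_one_le_zero)
qed

lemma sat_set:
  assumes ii2: "isoterm S (replicate (m - 1) (0::nat))" and m: "m \<ge> 2"
    and s: "satisfies S u v"
  shows "set u = set v"
proof -
  have *: "set a \<subseteq> set b" if sab: "satisfies S a b" for a b
  proof
    fix c assume c: "c \<in> set a"
    show "c \<in> set b"
    proof (rule ccontr)
      assume "c \<notin> set b"
      then have "satisfies S (replicate (count_list a c) (0::nat)) []"
        using sat_count[OF sab, of c 0] by simp
      then have "replicate (count_list a c) (0::nat) = []" using sat_empty[OF ii2 m] by blast
      then show False using c count_list_0_iff[of a c] by simp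
    qed
  qed
  show ?thesis using *[OF s] *[OF sat_sym[OF s]] by blast
qed

lemma sat_pow:
  assumes ii2: "isoterm S (replicate (m - 1) (0::nat))" and m: "m \<ge> 2"
    and s: "satisfies S u v" and k: "count_list u c \<le> m - 1"
  shows "count_list v c = count_list u c"
proof -
  let ?k = "count_list u c" and ?k' = "count_list v c"
  have "satisfies S (replicate (m - 1 - ?k) 0 @ replicate ?k (0::nat) @ [])
          (replicate (m - 1 - ?k) 0 @ replicate ?k' 0 @ [])"
    using sat_ctx[OF sat_count[OF s, of c 0]] by blast
  note e0 = this
  have e: "satisfies S (replicate (m - 1) (0::nat)) (replicate (m - 1 - ?k + ?k') 0)"
  proof -
    have "m - 1 - ?k + ?k = m - 1" using k by simp
    then show ?thesis using e0 by (simp add: replicate_add'[symmetric])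
  qed
  show ?thesis
  proof (cases "m - 1 - ?k + ?k' = 0")
    case True
    then have "satisfies S (replicate (m - 1) (0::nat)) []" using e by simp
    then have "replicate (m - 1) (0::nat) = []" using sat_empty[OF ii2 m] by blast
    then show ?thesis using m by simp
  next
    case False
    then have "replicate (m - 1 - ?k + ?k') (0::nat) = replicate (m - 1) 0"
      using ii2 e unfolding isoterm_def is_word_def by (metis length_replicate list.size(3))
    then have "m - 1 - ?k + ?k' = m - 1" by (metis length_replicate)
    then show ?thesis using k by linarith
  qed
qed



lemma iso_rename:
  assumes ii2: "isoterm S (replicate (m - 1) (0::nat))" and m: "m \<ge> 2"
    and iso: "isoterm S w" and gf: "\<forall>a\<in>set w. g (f a) = a"
  shows "isoterm S (map f w)"
  unfolding isoterm_def
proof (intro allI impI)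
  fix w' assume w': "is_word w'" and s: "satisfies S (map f w) w'"
  have "map g (map f w) = w" using gf by (induction w) auto
  then have "satisfies S w (map g w')" using sat_map[OF s, of g] by simp
  moreover have "is_word (map g w')" using w' by (simp add: is_word_def)
  ultimately have mg: "map g w' = w" using iso unfolding isoterm_def by blast
  have st: "set w' = set (map f w)" using sat_set[OF ii2 m s] by simp
  have fg: "\<forall>x\<in>set w'. f (g x) = x"
  proof
    fix x assume "x \<in> set w'"
    then obtain b where "b \<in> set w" "x = f b" using st by auto
    then show "f (g x) = x" using gf by simp
  qed
  have "map f (map g w') = w'"
    using fg by (induction w') auto
  then show "w' = map f w" using mg by simp
qed

lemma determ:
  "(\<forall>c\<in>set u \<union> set v. \<forall>d\<in>set u \<union> set v.
      filter (\<lambda>x. x = c \<or> x = d) u = filter (\<lambda>x. x = c \<or> x = d) v) \<Longrightarrow> u = v"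
proof (induction u arbitrary: v)
  case Nil
  show ?case
  proof (cases v)
    case (Cons e v')
    then show ?thesis using Nil.prems by (auto dest!: bspec[of _ _ e])
  qed simp
next
  case (Cons c u')
  show ?case
  proof (cases v)
    case Nil
    then show ?thesis using Cons.prems by (auto dest!: bspec[of _ _ c])
  next
    case (Cons e v')
    have ce: "c = e"
    proof (rule ccontr)
      assume "c \<noteq> e"
      then show False using Cons.prems \<open>v = e # v'\<close>
        by (auto dest!: bspec[of _ _ c] dest: bspec[of _ _ e])
    qed
    have "u' = v'"
    proof (rule Cons.IH, intro ballI)
      fix c' d' assume "c' \<in> set u' \<union> set v'" "d' \<in> set u' \<union> set v'"
      then have "c' \<in> set (c # u') \<union> set v" "d' \<in> set (c # u') \<union> set v"
        using \<open>v = e # v'\<close> by auto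
      then have "filter (\<lambda>x. x = c' \<or> x = d') (c # u') = filter (\<lambda>x. x = c' \<or> x = d') (e # v')"
        using Cons.prems \<open>v = e # v'\<close> by blast
      then show "filter (\<lambda>x. x = c' \<or> x = d') u' = filter (\<lambda>x. x = c' \<or> x = d') v'"
        using ce by (auto split: if_splits)
    qed
    then show ?thesis using ce \<open>v = e # v'\<close> by simp
  qed
qed



lemma upt_split: "a \<le> b \<Longrightarrow> b \<le> c \<Longrightarrow> [a..<c] = [a..<b] @ [b..<c]"
  using upt_add_eq_append[of a b "c - b"] by simp

lemma filt_Y1:
  assumes "1 \<le> i" "i \<le> n" "\<forall>x\<in>{1..n}. P x \<longleftrightarrow> x = i"
  shows "filter P [1..<n+1] = [i]"
proof -
  have "[1..<n+1] = [1..<i] @ [i..<n+1]" using assms by (intro upt_split) auto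
  also have "[i..<n+1] = i # [Suc i..<n+1]" using assms by (intro upt_conv_Cons) auto
  finally show ?thesis using assms by simp
qed

lemma filt_Y2:
  assumes "1 \<le> i" "i < j" "j \<le> n" "\<forall>x\<in>{1..n}. P x \<longleftrightarrow> x = i \<or> x = j"
  shows "filter P [1..<n+1] = [i, j]"
proof -
  have "[1..<n+1] = [1..<i] @ [i..<n+1]" using assms by (intro upt_split) auto
  also have "[i..<n+1] = i # [Suc i..<n+1]" using assms by (intro upt_conv_Cons) auto
  also have "[Suc i..<n+1] = [Suc i..<j] @ [j..<n+1]" using assms by (intro upt_split) auto
  also have "[j..<n+1] = j # [Suc j..<n+1]" using assms by (intro upt_conv_Cons) auto
  finally show ?thesis using assms by simp
qed

lemma filter_eq_rep: "filter (\<lambda>x. x = c) xs = replicate (count_list xs c) c"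
  by (induction xs) auto

lemma count_filter: "P c \<Longrightarrow> count_list (filter P xs) c = count_list xs c"
  by (induction xs) auto

lemma set_word_i: "k \<ge> 1 \<Longrightarrow> set (word_i k n) = insert 0 {1..n}"
  unfolding word_i_def by auto

lemma count_list_rep[simp]: "count_list (replicate k a) b = (if a = b then k else 0)"
  by (induction k) auto

lemma count_word_i0: "count_list (word_i k n) 0 = k + 2"
proof -
  have "count_list [1..<n+1] 0 = 0" by (simp add: count_list_0_iff)
  then show ?thesis unfolding word_i_def by (simp add: count_list_rep)
qed

lemma iv_rename:
  assumes iv: "\<And>u. is_word u \<Longrightarrow> satisfies S u (replicate (m - 2) 0 @ [1, 0, 1, 0]) \<Longrightarrow>
               count_list u 0 = m \<Longrightarrow> u = replicate (m - 2) 0 @ [1, 0, 1, 0]"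
    and ii2: "isoterm S (replicate (m - 1) (0::nat))" and m: "m \<ge> 3"
    and i0: "i \<noteq> 0" and s: "satisfies S u (replicate (m - 2) 0 @ [i, 0, i, 0])"
    and c: "count_list u 0 = m"
  shows "u = replicate (m - 2) 0 @ [i, 0, i, 0]"
proof -
  define g where "g = (\<lambda>v::nat. if v = i then 1 else v)"
  define f where "f = (\<lambda>v::nat. if v = 1 then i else v)"
  have su: "set u = insert 0 {i}" using sat_set[OF ii2 _ s] m by auto
  have "satisfies S (map g u) (map g (replicate (m - 2) 0 @ [i, 0, i, 0]))"
    using sat_map[OF s] by blast
  then have s2: "satisfies S (map g u) (replicate (m - 2) 0 @ [1, 0, 1, 0])"
    using i0 by (simp add: g_def map_replicate_const)
  have cg: "count_list (map g xs) 0 = count_list xs 0" if "set xs \<subseteq> insert 0 {i}" for xs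
    using that i0 by (induction xs) (auto simp: g_def)
  have "is_word (map g u)" using c m su by (auto simp: is_word_def)
  then have mg: "map g u = replicate (m - 2) 0 @ [1, 0, 1, 0]"
    using iv[OF _ s2] cg[of u] su c by simp
  have fg: "\<forall>v\<in>set u. f (g v) = v" using su i0 by (auto simp: f_def g_def)
  have "map f (map g u) = u" using fg by (induction u) auto
  then show ?thesis using mg i0 by (simp add: f_def map_replicate_const)
qed

lemma reconstruct:
  assumes iv: "\<And>u. is_word u \<Longrightarrow> satisfies S u (replicate (m - 2) 0 @ [1, 0, 1, 0]) \<Longrightarrow>
               count_list u 0 = m \<Longrightarrow> u = replicate (m - 2) 0 @ [1, 0, 1, 0]"
    and ii1: "isoterm S [0, 1, 1, 0]"
    and ii2: "isoterm S (replicate (m - 1) (0::nat))" and m: "m \<ge> 3"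
    and s: "satisfies S (word_i (m - 2) n) u" and c: "count_list u 0 = m"
  shows "u = word_i (m - 2) n"
proof -
  let ?w = "word_i (m - 2) n"
  define F where "F = (\<lambda>c d. filter (\<lambda>x::nat. x = c \<or> x = d))"
  have m2: "m \<ge> 2" using m by simp
  have sw: "set ?w = insert 0 {1..n}" using set_word_i m by simp
  have su: "set u = set ?w" using sat_set[OF ii2 m2 s] by simp
  have sF: "satisfies S (F c d ?w) (F c d u)" for c d unfolding F_def using sat_filter[OF s] by blast
  have A: "F 0 i u = F 0 i ?w" if "1 \<le> i" "i \<le> n" for i
  proof -
    have "filter (\<lambda>x. x = 0 \<or> x = i) [1..<n+1] = [i]" using that by (intro filt_Y1) auto
    then have Fw: "F 0 i ?w = replicate (m - 2) 0 @ [i, 0, i, 0]"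
      unfolding F_def word_i_def by (simp add: rev_filter[symmetric])
    have i0: "i \<noteq> 0" using that by simp
    have s1: "satisfies S (F 0 i u) (replicate (m - 2) 0 @ [i, 0, i, 0])"
      using sat_sym[OF sF[of 0 i]] Fw by simp
    have c1: "count_list (F 0 i u) 0 = m"
      using c count_filter[of "\<lambda>x. x = 0 \<or> x = i" 0 u] unfolding F_def by simp
    have "F 0 i u = replicate (m - 2) 0 @ [i, 0, i, 0]"
      by (rule iv_rename[OF iv ii2 m i0 s1 c1])
    then show ?thesis using Fw by simp
  qed
  have B: "F i j u = F i j ?w" if "1 \<le> i" "i < j" "j \<le> n" for i j
  proof -
    have h: "filter (\<lambda>x. x = i \<or> x = j) [1..<n+1] = [i, j]" using that by (intro filt_Y2) auto
    have Fw: "F i j ?w = [i, j, j, i]"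
      unfolding F_def word_i_def filter_append rev_filter[symmetric] h using that by simp
    have iso: "isoterm S (map (\<lambda>v::nat. if v = 0 then i else j) [0, 1, 1, 0])"
      using iso_rename[OF ii2 m2 ii1, where g="\<lambda>v. if v = i then 0 else 1" and f="\<lambda>v. if v = 0 then i else j"] that by simp
    have s2: "satisfies S [i, j, j, i] (F i j u)" using sF[of i j] Fw by simp
    have "F i j u \<noteq> []"
    proof
      assume "F i j u = []"
      then show False using sat_empty[OF ii2 m2, of "[i,j,j,i]"] s2 by simp
    qed
    then have "F i j u = [i, j, j, i]" using iso s2 unfolding isoterm_def is_word_def by auto
    then show ?thesis using Fw by simp
  qed
  have C: "F 0 0 u = F 0 0 ?w"
  proof -
    have "count_list ?w 0 = m" using count_word_i0[of "m-2" n] m by simp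
    then show ?thesis using c unfolding F_def by (simp add: filter_eq_rep)
  qed
  have Fsym: "F c d = F d c" for c d unfolding F_def by (rule ext, rule filter_cong) auto
  have Fdiag: "F c c x = filter (\<lambda>y. y = c) (F 0 c x)" for c x
    unfolding F_def by (auto intro: filter_cong)
  have all: "F c d u = F c d ?w" if "c \<in> set ?w" "d \<in> set ?w" for c d
  proof -
    have Ac: "F 0 c u = F 0 c ?w" if "c \<in> set ?w" "c \<noteq> 0" for c
      using A that sw by auto
    show ?thesis
    proof (cases "c = d")
      case True
      then show ?thesis
        using C Ac[of c] Fdiag[of c] that by (cases "c = 0") auto
    next
      case False
      show ?thesis
      proof (cases "c = 0 \<or> d = 0")
        case True
        then show ?thesis using Ac[of c] Ac[of d] Fsym[of c d] that False by auto
      next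
        case nz: False
        then have c1: "1 \<le> c" "c \<le> n" "1 \<le> d" "d \<le> n" using that sw by auto
        show ?thesis
        proof (cases "c < d")
          case True
          then show ?thesis using B c1 by auto
        next
          case False
          then have "d < c" using \<open>c \<noteq> d\<close> by simp
          then show ?thesis using B[of d c] c1 Fsym[of c d] by auto
        qed
      qed
    qed
  qed
  show ?thesis
    by (rule determ) (use all su in \<open>auto simp: F_def\<close>)
qed



lemma app_split_c:
  assumes "X @ Y = L @ c # R" "c \<notin> set Y"
  shows "\<exists>R'. R = R' @ Y \<and> X = L @ c # R'"
proof -
  from assms(1) obtain us where
    "(X = L @ us \<and> us @ Y = c # R) \<or> (X @ us = L \<and> Y = us @ c # R)"
    by (auto simp: append_eq_append_conv2)
  then show ?thesis
  proof
    assume h: "X = L @ us \<and> us @ Y = c # R"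
    show ?thesis
    proof (cases us)
      case Nil then show ?thesis using h assms(2) by auto
    next
      case (Cons a us') then show ?thesis using h by auto
    qed
  next
    assume "X @ us = L \<and> Y = us @ c # R"
    then show ?thesis using assms(2) by auto
  qed
qed

lemma lemR:
  assumes "\<forall>v\<in>set s. v \<noteq> z \<longrightarrow> 0 \<notin> set (\<sigma> v)" "\<sigma> z = [0]"
    "subst \<sigma> s = L @ [0] @ R" "0 \<notin> set R"
  shows "\<exists>A B. s = A @ [z] @ B \<and> subst \<sigma> A = L \<and> subst \<sigma> B = R"
  using assms
proof (induction s arbitrary: L R rule: rev_induct)
  case Nil then show ?case by simp
next
  case (snoc v s')
  show ?case
  proof (cases "v = z")
    case True
    then have "subst \<sigma> s' @ [0] = L @ [0] @ R" using snoc.prems by simp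
    note e = this
    have R0: "R = []"
    proof (rule ccontr)
      assume "R \<noteq> []"
      then have "last (L @ [0] @ R) = last R" by simp
      moreover have "last (L @ [0] @ R) = 0" using e[symmetric] by (metis last_snoc)
      ultimately have "last R = 0" by simp
      then show False using \<open>R \<noteq> []\<close> snoc.prems(4) last_in_set by metis
    qed
    then have "R = [] \<and> L = subst \<sigma> s'" using e by simp
    then show ?thesis using True by (intro exI[of _ s'] exI[of _ "[]"]) auto
  next
    case False
    then have nz: "0 \<notin> set (\<sigma> v)" using snoc.prems by auto
    have "subst \<sigma> s' @ \<sigma> v = L @ 0 # R" using snoc.prems by simp
    then obtain R' where R': "R = R' @ \<sigma> v" "subst \<sigma> s' = L @ 0 # R'"
      using app_split_c[OF _ nz] by blast
    then obtain A B where "s' = A @ [z] @ B" "subst \<sigma> A = L" "subst \<sigma> B = R'"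
    proof -
      have "0 \<notin> set R'" using snoc.prems(4) R'(1) by simp
      moreover have "\<forall>v\<in>set s'. v \<noteq> z \<longrightarrow> 0 \<notin> set (\<sigma> v)" using snoc.prems(1) by simp
      ultimately show ?thesis using snoc.IH[of L R'] snoc.prems(2) R'(2) that by auto
    qed
    then show ?thesis using R' by (intro exI[of _ A] exI[of _ "B @ [v]"]) auto
  qed
qed

lemma count0_subst:
  "\<forall>v\<in>set A. v \<noteq> z \<longrightarrow> 0 \<notin> set (\<sigma> v) \<Longrightarrow> \<sigma> z = [0] \<Longrightarrow>
   count_list (subst \<sigma> A) 0 = count_list A z"
  by (induction A) auto

lemma pigeon:
  assumes "subst \<sigma> S1 = Y" "distinct Y" "card (set S1) < length Y"
  shows "\<exists>p\<in>set S1. length (\<sigma> p) \<ge> 2"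
proof (rule ccontr)
  assume nt: "\<not> ?thesis"
  have le: "\<forall>p\<in>set S1. card (set (\<sigma> p)) \<le> 1"
  proof
    fix p assume "p \<in> set S1"
    then have "length (\<sigma> p) \<le> 1" using nt by auto
    then show "card (set (\<sigma> p)) \<le> 1" using card_length[of "\<sigma> p"] by linarith
  qed
  have "set Y = (\<Union>v\<in>set S1. set (\<sigma> v))" using assms(1) by (auto simp: subst_def)
  then have "card (set Y) \<le> (\<Sum>v\<in>set S1. card (set (\<sigma> v)))"
    by (simp add: card_UN_le)
  also have "\<dots> \<le> (\<Sum>v\<in>set S1. 1)" by (rule sum_mono) (use le in auto)
  also have "\<dots> = card (set S1)" by simp
  finally show False using assms(2,3) by (simp add: distinct_card)
qed

lemma distinct_count:
  "distinct (subst \<sigma> S) \<Longrightarrow> \<sigma> p \<noteq> [] \<Longrightarrow> count_list S p \<le> 1"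
proof (induction S)
  case Nil then show ?case by simp
next
  case (Cons v S')
  have d: "distinct (subst \<sigma> S')" using Cons.prems by simp
  show ?case
  proof (cases "v = p")
    case True
    have "p \<notin> set S'"
    proof
      assume "p \<in> set S'"
      then have "set (\<sigma> p) \<subseteq> set (subst \<sigma> S')" by (auto simp: subst_def)
      moreover obtain a where "a \<in> set (\<sigma> p)" using Cons.prems(2) by (cases "\<sigma> p") auto
      ultimately show False using Cons.prems(1) True by auto
    qed
    then show ?thesis using True by simp
  next
    case False then show ?thesis using Cons.IH d Cons.prems by simp
  qed
qed

lemma set_sub_subst: "v \<in> set A \<Longrightarrow> set (\<sigma> v) \<subseteq> set (subst \<sigma> A)"
  by (auto simp: subst_def)

lemma infix_subst: "v \<in> set A \<Longrightarrow> \<exists>L R. subst \<sigma> A = L @ \<sigma> v @ R"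
proof -
  assume "v \<in> set A"
  then obtain A1 A2 where "A = A1 @ v # A2" by (meson split_list)
  then show ?thesis by (intro exI[of _ "subst \<sigma> A1"] exI[of _ "subst \<sigma> A2"]) simp
qed

lemma no_common_infix:
  assumes "[1..<n+1] = L1 @ U @ R1" "rev [1..<n+1] = L2 @ U @ R2" "length U \<ge> 2"
  shows False
proof -
  obtain a b r where U: "U = a # b # r" using assms(3)
    by (cases U; cases "tl U") auto
  have "sorted_wrt (<) [1..<n+1]" by (rule sorted_wrt_upt)
  then have "sorted_wrt (<) (L1 @ U @ R1)" using assms(1) by (simp only:)
  then have "a < b" using U by (simp add: sorted_wrt_append)
  have "sorted_wrt (<) [1..<n+1]" by (rule sorted_wrt_upt)
  then have "sorted_wrt (\<lambda>x y. y < x) (rev [1..<n+1])" by (simp only: sorted_wrt_rev)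
  then have "sorted_wrt (\<lambda>x y. y < x) (L2 @ U @ R2)" using assms(2) by simp
  then have "b < a" using U by (simp add: sorted_wrt_append)
  then show False using \<open>a < b\<close> by simp
qed



definition th :: "nat \<Rightarrow> nat \<Rightarrow> nat \<Rightarrow> nat \<Rightarrow> nat list" where
  "th z p q = (\<lambda>v. if v = z then [0] else if v = p then [1] else if v = q then [2] else [])"

lemma th_rep: "p \<notin> set A \<Longrightarrow> q \<notin> set A \<Longrightarrow> subst (th z p q) A = replicate (count_list A z) 0"
  by (induction A) (auto simp: th_def)

lemma th_count: "count_list (subst (th z p q) u) 0 = count_list u z"
  by (induction u) (auto simp: th_def)

lemma th_one:
  assumes "z \<notin> set A" "q \<notin> set A" "count_list A p = 1"
  shows "subst (th z p q) A = [1]"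
proof -
  obtain pref rest where A: "A = pref @ p # rest" "p \<notin> set pref" "count_list rest p = 0"
    using count_list_Suc_split_first[of A p 0] assms(3) by auto
  have "p \<notin> set rest" using A(3) count_list_0_iff by metis
  moreover have "p \<noteq> z" "p \<noteq> q" using assms A by auto
  ultimately show ?thesis using A assms th_rep[of p pref q z] th_rep[of p rest q z]
    by (auto simp: th_def count_list_0_iff)
qed

lemma th_two:
  assumes "z \<notin> set A" "p \<notin> set A" "count_list A q = 1"
  shows "subst (th z p q) A = [2]"
proof -
  obtain pref rest where A: "A = pref @ q # rest" "q \<notin> set pref" "count_list rest q = 0"
    using count_list_Suc_split_first[of A q 0] assms(3) by auto
  have "q \<notin> set rest" using A(3) count_list_0_iff by metis
  moreover have "q \<noteq> z" "q \<noteq> p" using assms A by auto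
  ultimately show ?thesis using A assms th_rep[of p pref q z] th_rep[of p rest q z]
    by (auto simp: th_def count_list_0_iff)
qed

lemma problem:
  fixes S :: "'a::monoid_mult itself"
  assumes ii2: "isoterm S (replicate (m - 1) (0::nat))"
    and iii: "isoterm S (replicate (m - 2) 0 @ [1, 0, 2, 0])"
    and m: "m \<ge> 3"
    and st: "satisfies S s t" and card: "card (set s) < n"
    and w: "subst \<sigma> s = word_i (m - 2) n"
    and z: "\<sigma> z = [0]" and cz: "count_list s z = m"
    and oth: "\<forall>v\<in>set s. v \<noteq> z \<longrightarrow> 0 \<notin> set (\<sigma> v)"
  shows "count_list t z = m"
proof -
  define Y1 where "Y1 = [1..<n+1]"
  have m2: "m \<ge> 2" using m by simp
  have Y0: "0 \<notin> set Y1" "0 \<notin> set (rev Y1)" by (auto simp: Y1_def)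
  have Yd: "distinct Y1" "distinct (rev Y1)" "length Y1 = n" "length (rev Y1) = n"
    by (auto simp: Y1_def)
  have wd: "subst \<sigma> s = (replicate (m - 2) 0 @ Y1 @ [0] @ rev Y1) @ [0] @ []"
    using w by (simp add: word_i_def Y1_def)
  obtain A1 D where s1: "s = A1 @ [z] @ D" "subst \<sigma> A1 = replicate (m - 2) 0 @ Y1 @ [0] @ rev Y1"
      "subst \<sigma> D = []"
    using lemR[OF oth z wd] by auto
  have oth1: "\<forall>v\<in>set A1. v \<noteq> z \<longrightarrow> 0 \<notin> set (\<sigma> v)" using oth s1(1) by auto
  have "subst \<sigma> A1 = (replicate (m - 2) 0 @ Y1) @ [0] @ rev Y1" using s1(2) by simp
  then obtain A2 S2 where s2: "A1 = A2 @ [z] @ S2" "subst \<sigma> A2 = replicate (m - 2) 0 @ Y1"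
      "subst \<sigma> S2 = rev Y1"
    using lemR[OF oth1 z _ Y0(2)] by blast
  have oth2: "\<forall>v\<in>set A2. v \<noteq> z \<longrightarrow> 0 \<notin> set (\<sigma> v)" using oth1 s2(1) by auto
  have "replicate (m - 2) (0::nat) = replicate (m - 3) 0 @ [0]"
  proof -
    have "m - 2 = Suc (m - 3)" using m by simp
    then show ?thesis by (simp add: replicate_append_same)
  qed
  then have "subst \<sigma> A2 = replicate (m - 3) 0 @ [0] @ Y1" using s2(2) by simp
  then obtain P S1 where s3: "A2 = P @ [z] @ S1" "subst \<sigma> P = replicate (m - 3) 0"
      "subst \<sigma> S1 = Y1"
    using lemR[OF oth2 z _ Y0(1)] by blast
  have sdec: "s = P @ [z] @ S1 @ [z] @ S2 @ [z] @ D" using s1(1) s2(1) s3(1) by simp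
  have cS1: "card (set S1) < length Y1"
    using card card_mono[of "set s" "set S1"] Yd(3) sdec by fastforce
  have cS2: "card (set S2) < length (rev Y1)"
    using card card_mono[of "set s" "set S2"] Yd(4) sdec by fastforce
  obtain p where p: "p \<in> set S1" "length (\<sigma> p) \<ge> 2" using pigeon[OF s3(3) Yd(1) cS1] by blast
  obtain q where q: "q \<in> set S2" "length (\<sigma> q) \<ge> 2" using pigeon[OF s2(3) Yd(2) cS2] by blast
  have pS2: "p \<notin> set S2"
  proof
    assume "p \<in> set S2"
    then obtain L2 R2 where "rev Y1 = L2 @ \<sigma> p @ R2" using infix_subst s2(3) by metis
    moreover obtain L1 R1 where "Y1 = L1 @ \<sigma> p @ R1" using infix_subst[OF p(1)] s3(3) by metis
    ultimately show False using no_common_infix p(2) unfolding Y1_def by metis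
  qed
  have qS1: "q \<notin> set S1"
  proof
    assume "q \<in> set S1"
    then obtain L1 R1 where "Y1 = L1 @ \<sigma> q @ R1" using infix_subst s3(3) by metis
    moreover obtain L2 R2 where "rev Y1 = L2 @ \<sigma> q @ R2" using infix_subst[OF q(1)] s2(3) by metis
    ultimately show False using no_common_infix q(2) unfolding Y1_def by metis
  qed
  have spY: "set (\<sigma> p) \<subseteq> set Y1" using set_sub_subst[OF p(1), of \<sigma>] s3(3) by simp
  have sqY: "set (\<sigma> q) \<subseteq> set (rev Y1)" using set_sub_subst[OF q(1), of \<sigma>] s2(3) by simp
  obtain a where a: "a \<in> set (\<sigma> p)" using p(2) by (cases "\<sigma> p") auto
  obtain b where b: "b \<in> set (\<sigma> q)" using q(2) by (cases "\<sigma> q") auto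
  have pP: "p \<notin> set P"
  proof
    assume "p \<in> set P"
    then have "a \<in> set (replicate (m - 3) (0::nat))" using set_sub_subst[of p P \<sigma>] s3(2) a by auto
    then show False using a spY Y0 by (auto split: if_splits)
  qed
  have qP: "q \<notin> set P"
  proof
    assume "q \<in> set P"
    then have "b \<in> set (replicate (m - 3) (0::nat))" using set_sub_subst[of q P \<sigma>] s3(2) b by auto
    then show False using b sqY Y0 by (auto split: if_splits)
  qed
  have pD: "p \<notin> set D" using set_sub_subst[of p D \<sigma>] s1(3) a by auto
  have qD: "q \<notin> set D" using set_sub_subst[of q D \<sigma>] s1(3) b by auto
  have zS1: "z \<notin> set S1" using set_sub_subst[of z S1 \<sigma>] s3(3) z Y0 by auto
  have zS2: "z \<notin> set S2" using set_sub_subst[of z S2 \<sigma>] s2(3) z Y0 by auto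
  have zD: "z \<notin> set D" using set_sub_subst[of z D \<sigma>] s1(3) z by auto
  have cp: "count_list S1 p = 1"
  proof -
    have "count_list S1 p \<le> 1" using distinct_count[of \<sigma> S1 p] s3(3) Yd(1) a by fastforce
    moreover have "count_list S1 p \<noteq> 0" using p(1) count_list_0_iff by metis
    ultimately show ?thesis by simp
  qed
  have cq: "count_list S2 q = 1"
  proof -
    have "count_list S2 q \<le> 1" using distinct_count[of \<sigma> S2 q] s2(3) Yd(2) b by fastforce
    moreover have "count_list S2 q \<noteq> 0" using q(1) count_list_0_iff by metis
    ultimately show ?thesis by simp
  qed
  have othP: "\<forall>v\<in>set P. v \<noteq> z \<longrightarrow> 0 \<notin> set (\<sigma> v)" using oth sdec by auto
  have cP: "count_list P z = m - 3"
    using count0_subst[OF othP z] s3(2) by simp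
  let ?th = "th z p q"
  have ths: "subst ?th s = replicate (m - 2) 0 @ [1, 0, 2, 0]"
  proof -
    have "subst ?th s = replicate (m - 3) 0 @ [0] @ [1] @ [0] @ [2] @ [0]"
      using sdec th_rep[OF pP qP, of z] cP th_one[OF zS1 qS1 cp] th_two[OF zS2 pS2 cq]
        th_rep[OF pD qD, of z] zD
      by (simp add: th_def count_list_0_iff)
    then show ?thesis using \<open>replicate (m - 2) (0::nat) = replicate (m - 3) 0 @ [0]\<close> by simp
  qed
  have st2: "satisfies S (replicate (m - 2) 0 @ [1, 0, 2, 0]) (subst ?th t)"
    using sat_subst[OF st, of ?th] ths by simp
  have "subst ?th t \<noteq> []"
  proof
    assume "subst ?th t = []"
    then show False using sat_empty[OF ii2 m2] st2 by fastforce
  qed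
  then have "subst ?th t = replicate (m - 2) 0 @ [1, 0, 2, 0]"
    using iii st2 unfolding isoterm_def is_word_def by blast
  then have "count_list t z = count_list (replicate (m - 2) (0::nat) @ [1, 0, 2, 0]) 0"
    using th_count[of z p q t] by simp
  then show ?thesis using m by simp
qed



lemma count_subst_sum:
  "count_list (subst \<sigma> u) c = (\<Sum>v\<in>set u. count_list u v * count_list (\<sigma> v) c)"
proof -
  have "count_list (subst \<sigma> u) c = sum_list (map (\<lambda>v. count_list (\<sigma> v) c) u)"
    by (induction u) auto
  then show ?thesis by (simp add: sum_list_map_eq_sum_count)
qed

lemma term_le:
  "v \<in> set u \<Longrightarrow> count_list u v * count_list (\<sigma> v) c \<le> count_list (subst \<sigma> u) c"
  unfolding count_subst_sum by (rule member_le_sum) auto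

lemma two_terms_le:
  assumes "v \<in> set u" "x \<in> set u" "x \<noteq> v"
  shows "count_list u v * count_list (\<sigma> v) c + count_list u x * count_list (\<sigma> x) c
           \<le> count_list (subst \<sigma> u) c"
proof -
  let ?f = "\<lambda>v. count_list u v * count_list (\<sigma> v) c"
  have "sum ?f (set u) = ?f v + sum ?f (set u - {v})"
    using assms(1) by (simp add: sum.remove)
  moreover have "?f x \<le> sum ?f (set u - {v})"
    by (rule member_le_sum) (use assms in auto)
  ultimately show ?thesis unfolding count_subst_sum by simp
qed

lemma distinct_count_le1: "distinct xs \<Longrightarrow> count_list xs y \<le> 1"
  by (induction xs) (auto simp: count_list_0_iff)

lemma count_word_i_y: "y \<noteq> 0 \<Longrightarrow> count_list (word_i k n) y \<le> 2"
proof -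
  assume y: "y \<noteq> 0"
  have "count_list [1..<n+1] y \<le> 1" by (rule distinct_count_le1) simp
  then show ?thesis using y unfolding word_i_def by simp
qed

lemma K:
  fixes S :: "'a::monoid_mult itself"
  assumes iv: "\<And>u. is_word u \<Longrightarrow> satisfies S u (replicate (m - 2) 0 @ [1, 0, 1, 0]) \<Longrightarrow>
               count_list u 0 = m \<Longrightarrow> u = replicate (m - 2) 0 @ [1, 0, 1, 0]"
    and ii1: "isoterm S [0, 1, 1, 0]"
    and ii2: "isoterm S (replicate (m - 1) (0::nat))"
    and iii: "isoterm S (replicate (m - 2) 0 @ [1, 0, 2, 0])"
    and m: "m \<ge> 3"
    and st: "satisfies S s t" and card: "card (set s) < n"
    and eq: "a @ subst \<sigma> s @ b = word_i (m - 2) n"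
  shows "a @ subst \<sigma> t @ b = word_i (m - 2) n"
proof -
  let ?w = "word_i (m - 2) n"
  have m2: "m \<ge> 2" using m by simp
  have su: "satisfies S ?w (a @ subst \<sigma> t @ b)"
    using sat_ctx[OF sat_subst[OF st, of \<sigma>], of a b] eq by simp
  have set_st: "set s = set t" using sat_set[OF ii2 m2 st] .
  define f where "f = (\<lambda>v. count_list (\<sigma> v) (0::nat))"
  have cw: "count_list ?w 0 = m" using count_word_i0[of "m - 2" n] m by simp
  have tot: "count_list a 0 + count_list (subst \<sigma> s) 0 + count_list b 0 = m"
    using cw eq[symmetric] by simp
  have terms: "count_list s v * f v = count_list t v * f v" if v: "v \<in> set s" for v
  proof (cases "f v = 0")
    case True then show ?thesis by simp
  next
    case False
    have le: "count_list s v * f v \<le> m" using term_le[OF v, of \<sigma> 0] tot unfolding f_def by linarith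
    have "count_list s v \<le> count_list s v * f v" using False by (cases "f v") auto
    then have csm: "count_list s v \<le> m" using le by linarith
    show ?thesis
    proof (cases "count_list s v \<le> m - 1")
      case True
      then show ?thesis using sat_pow[OF ii2 m2 st True] by simp
    next
      case False2: False
      then have cs: "count_list s v = m" using csm by simp
      then have f1: "f v = 1" using le False m by (cases "f v") auto
      have tm: "count_list s v * count_list (\<sigma> v) 0 = m" using cs f1 f_def by simp
      have a0: "count_list a 0 = 0" and b0: "count_list b 0 = 0"
        using term_le[OF v, of \<sigma> 0] tm tot by linarith+
      have oth: "\<forall>x\<in>set s. x \<noteq> v \<longrightarrow> 0 \<notin> set (\<sigma> x)"
      proof (intro ballI impI)
        fix x assume x: "x \<in> set s" "x \<noteq> v"
        have "count_list s x * count_list (\<sigma> x) 0 = 0"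
          using two_terms_le[OF v x, of \<sigma> 0] tm tot by linarith
        moreover have "count_list s x \<noteq> 0" using x(1) count_list_0_iff by metis
        ultimately show "0 \<notin> set (\<sigma> x)" using count_list_0_iff by (metis mult_eq_0_iff)
      qed
      have hw: "?w = 0 # (replicate (m - 3) 0 @ [1..<n+1] @ [0] @ rev [1..<n+1] @ [0])"
      proof -
        have "m - 2 = Suc (m - 3)" using m by simp
        then show ?thesis unfolding word_i_def by simp
      qed
      have aN: "a = []"
      proof (cases a)
        case (Cons c a')
        then have "c = 0" using eq hw by simp
        then show ?thesis using a0 Cons by simp
      qed simp
      have lw: "last ?w = 0" unfolding word_i_def by simp
      have bN: "b = []"
      proof (rule ccontr)
        assume "b \<noteq> []"
        then have "last (a @ subst \<sigma> s @ b) = last b" by simp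
        then have "last b = 0" using eq lw by simp
        then have "0 \<in> set b" using \<open>b \<noteq> []\<close> last_in_set by metis
        then show False using b0 count_list_0_iff by metis
      qed
      have ws: "subst \<sigma> s = ?w" using eq aN bN by simp
      have sv0: "set (\<sigma> v) \<subseteq> {0}"
      proof
        fix y assume y: "y \<in> set (\<sigma> v)"
        show "y \<in> {0}"
        proof (rule ccontr)
          assume "y \<notin> {0}"
          then have "count_list ?w y \<le> 2" using count_word_i_y by simp
          moreover have "count_list (\<sigma> v) y \<ge> 1" using y count_list_0_iff
            by (metis less_one not_le)
          then have "count_list s v * count_list (\<sigma> v) y \<ge> m" using cs by simp
          ultimately show False using term_le[OF v, of \<sigma> y] ws m by simp
        qed
      qed
      have gen: "set xs \<subseteq> {0} \<Longrightarrow> count_list xs (0::nat) = length xs" for xs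
        by (induction xs) auto
      have "count_list (\<sigma> v) 0 = length (\<sigma> v)" using gen[OF sv0] .
      then have "replicate 1 (0::nat) = \<sigma> v" using f1 f_def sv0 replicate_length_same[of "\<sigma> v" 0]
        by auto
      then have z: "\<sigma> v = [0]" by simp
      have "count_list t v = m"
        using problem[OF ii2 iii m st card ws z cs oth] .
      then show ?thesis using cs by simp
    qed
  qed
  have "count_list (subst \<sigma> t) 0 = count_list (subst \<sigma> s) 0"
    unfolding count_subst_sum set_st
  proof (rule sum.cong)
    fix v assume "v \<in> set t"
    then show "count_list t v * count_list (\<sigma> v) 0 = count_list s v * count_list (\<sigma> v) 0"
      using terms[of v] set_st f_def by auto
  qed simp
  then have cu: "count_list (a @ subst \<sigma> t @ b) 0 = m" using tot by simp
  show ?thesis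
    apply (rule reconstruct[OF _ ii1 ii2 m su cu])
    using iv by blast
qed



theorem theorem6p3:
  fixes S :: "'a::monoid_mult itself" and m :: nat
  assumes m3: "m \<ge> 3"
    and i: "\<And>n. n > 1 \<Longrightarrow> satisfies S (word_i (m - 2) n) (word_i (m - 1) n)"
    and ii1: "isoterm S [0, 1, 1, 0]"
    and ii2: "isoterm S (replicate (m - 1) 0)"
    and iii: "isoterm S (replicate (m - 2) 0 @ [1, 0, 2, 0])"
    and iv: "\<And>u. is_word u \<Longrightarrow> satisfies S u (replicate (m - 2) 0 @ [1, 0, 1, 0]) \<Longrightarrow>
               count_list u 0 = m \<Longrightarrow> u = replicate (m - 2) 0 @ [1, 0, 1, 0]"
  shows "\<not> finitely_based S"
proof
  assume "finitely_based S"
  then obtain \<Sigma> where fin: "finite \<Sigma>" and sound: "\<forall>(u, v) \<in> \<Sigma>. satisfies S u v"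
    and compl: "\<forall>u v. is_word u \<longrightarrow> is_word v \<longrightarrow> satisfies S u v \<longrightarrow> derivable \<Sigma> u v"
    unfolding finitely_based_def by blast
  define N where "N = Max (insert 0 ((\<lambda>p. card (set (fst p)) + card (set (snd p))) ` \<Sigma>))"
  define n where "n = N + 2"
  have bnd: "card (set s) < n \<and> card (set t) < n" if "(s, t) \<in> \<Sigma>" for s t
  proof -
    have "card (set s) + card (set t) \<le> N"
      unfolding N_def using fin that by (intro Max_ge) force+
    then show ?thesis unfolding n_def by simp
  qed
  let ?w = "word_i (m - 2) n"
  have inv: "derivable \<Sigma> u v \<Longrightarrow> (u = ?w \<longleftrightarrow> v = ?w)" for u v
  proof (induction rule: derivable.induct)
    case (step s t a \<sigma> b)
    have st: "satisfies S s t" using sound step by auto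
    have b: "card (set s) < n" "card (set t) < n" using bnd[OF step] by auto
    show ?case
    proof
      assume h: "a @ subst \<sigma> s @ b = ?w"
      show "a @ subst \<sigma> t @ b = ?w"
        by (rule K[OF _ ii1 ii2 iii m3 st b(1) h]) (use iv in blast)
    next
      assume h: "a @ subst \<sigma> t @ b = ?w"
      show "a @ subst \<sigma> s @ b = ?w"
        by (rule K[OF _ ii1 ii2 iii m3 sat_sym[OF st] b(2) h]) (use iv in blast)
    qed
  qed auto
  have "satisfies S ?w (word_i (m - 1) n)" using i[of n] unfolding n_def by simp
  moreover have "is_word ?w" "is_word (word_i (m - 1) n)"
    unfolding is_word_def word_i_def by auto
  ultimately have "derivable \<Sigma> ?w (word_i (m - 1) n)" using compl by blast
  then have "word_i (m - 1) n = ?w" using inv by blast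
  then have "length (word_i (m - 1) n) = length ?w" by simp
  then show False using m3 unfolding word_i_def by simp
qed


end
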